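(* Let $L$ be a relational language containing infinitely many binary relation symbols and let $\mathbf H$ be a countable $L$-hypergraph (with vertex set $\omega$) universal for all countable $L$-hypergraphs. Then there exist an $L$-hypergraph $\mathbf A$ on three vertices and a colouring $c:\binom{\mathbf H}{\mathbf A}\to\omega$ such that for every tree-like embedding $f:\mathbf H\to\mathbf H$, $c$ attains every value in $\omega$ on the set of embeddings $\mathbf A\to\mathbf H$ whose image lies in $f[\omega]$.
   Context: Convention: every structure is countable, has vertex set some $n\in\omega$ or $\omega$ ordered naturally, embeddings are monotone (order-preserving) embeddings of $L$-structures; $\binom{\mathbf H}{\mathbf A}$ is the set of such embeddings $\mathbf A\to\mathbf H$. An $L$-hypergraph is an $L$-structure in which all relations are injective (no repeated vertices in tuples) and symmetric, and every tuple lies in at most one relation. For $X\subseteq\omega$, $\mathrm{tp}_{\mathbf H}(X)$ is the isomorphism type (respecting the order) of the substructure induced on $X$. An embedding $f:\mathbf H\to\mathbf H$ is tree-like if for every finite $X=\{x_0<\dots<x_m\}\subseteq\omega$, every $0\le i\le m$ and every $x>x_m$ there is $y>x_m$ with $\mathrm{tp}_{\mathbf H}(f[X]\cup\{f(y)\})=\mathrm{tp}_{\mathbf H}(X\cup\{x\})$ and $\mathrm{tp}_{\mathbf H}(\{0,\dots,f(x_0)-1,f(y)\})=\mathrm{tp}_{\mathbf H}(\{0,\dots,f(x_0)-1,f(x_i)\})$. *)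

theory Defs
  imports Main "HOL-Library.Multiset" "HOL-Library.FuncSet"
begin

text \<open>A relational language is a type 'r of relation symbols with an arity function ar.
A countable structure is a pair (V, I): vertex set V, which is some n = {..<n} or
all of nat (omega), and interpretation I R t of each symbol R on tuples t (lists).\<close>

type_synonym 'r struc = "nat set \<times> ('r \<Rightarrow> nat list \<Rightarrow> bool)"

definition wf_struc :: "('r \<Rightarrow> nat) \<Rightarrow> 'r struc \<Rightarrow> bool" where
  "wf_struc ar S \<longleftrightarrow>
     ((\<exists>n. fst S = {..<n}) \<or> fst S = UNIV) \<and>
     (\<forall>R t. snd S R t \<longrightarrow> length t = ar R \<and> set t \<subseteq> fst S)"

definition hypergraph :: "('r \<Rightarrow> nat) \<Rightarrow> 'r struc \<Rightarrow> bool" where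
  "hypergraph ar S \<longleftrightarrow> wf_struc ar S \<and>
     (\<forall>R t. snd S R t \<longrightarrow> distinct t) \<and>
     (\<forall>R t t'. snd S R t \<and> mset t' = mset t \<longrightarrow> snd S R t') \<and>
     (\<forall>R R' t. snd S R t \<and> snd S R' t \<longrightarrow> R = R')"

text \<open>Monotone embeddings A -> B; made extensional (undefined outside the vertex set of A)
so that the set of embeddings is exactly the set of maps on the vertices.\<close>
definition is_emb :: "'r struc \<Rightarrow> 'r struc \<Rightarrow> (nat \<Rightarrow> nat) \<Rightarrow> bool" where
  "is_emb A B e \<longleftrightarrow> e \<in> extensional (fst A) \<and> e ` fst A \<subseteq> fst B \<and>
     strict_mono_on (fst A) e \<and>
     (\<forall>R t. set t \<subseteq> fst A \<longrightarrow> (snd A R t \<longleftrightarrow> snd B R (map e t)))"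

definition universal :: "('r \<Rightarrow> nat) \<Rightarrow> 'r struc \<Rightarrow> bool" where
  "universal ar H \<longleftrightarrow> (\<forall>G. hypergraph ar G \<longrightarrow> (\<exists>e. is_emb G H e))"

text \<open>tp_H(X) = tp_H(Y): there is an order isomorphism X -> Y which is an isomorphism
of the induced substructures.\<close>
definition same_tp :: "('r \<Rightarrow> nat list \<Rightarrow> bool) \<Rightarrow> nat set \<Rightarrow> nat set \<Rightarrow> bool" where
  "same_tp I X Y \<longleftrightarrow> (\<exists>g. bij_betw g X Y \<and> strict_mono_on X g \<and>
     (\<forall>R t. set t \<subseteq> X \<longrightarrow> (I R t \<longleftrightarrow> I R (map g t))))"

definition tree_like :: "('r \<Rightarrow> nat list \<Rightarrow> bool) \<Rightarrow> (nat \<Rightarrow> nat) \<Rightarrow> bool" where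
  "tree_like I f \<longleftrightarrow> is_emb (UNIV, I) (UNIV, I) f \<and>
     (\<forall>X. finite X \<and> X \<noteq> {} \<longrightarrow>
       (\<forall>xi\<in>X. \<forall>x>Max X. \<exists>y>Max X.
          same_tp I (f ` X \<union> {f y}) (X \<union> {x}) \<and>
          same_tp I ({..<f (Min X)} \<union> {f y}) ({..<f (Min X)} \<union> {f xi})))"

end

theory Submission imports Defs begin

lemma chain4:
  fixes a0 a1 a2 a3 b0 b1 b2 b3 :: nat
  assumes "a0<a1" "a1<a2" "a2<a3" "b0<b1" "b1<b2" "b2<b3"
    and "{a0,a1,a2,a3} = {b0,b1,b2,b3}"
  shows "a0=b0 \<and> a1=b1 \<and> a2=b2 \<and> a3=b3"
proof -
  have A: "a0 \<in> {b0,b1,b2,b3}" "a1 \<in> {b0,b1,b2,b3}" "a2 \<in> {b0,b1,b2,b3}" "a3 \<in> {b0,b1,b2,b3}"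
       and B: "b0 \<in> {a0,a1,a2,a3}" "b1 \<in> {a0,a1,a2,a3}" "b2 \<in> {a0,a1,a2,a3}" "b3 \<in> {a0,a1,a2,a3}"
    using assms(7) by blast+
  have 0: "a0 = b0"
  proof -
    have "b0 \<le> a0" using A(1) assms(4-6) by auto
    moreover have "a0 \<le> b0" using B(1) assms(1-3) by auto
    ultimately show ?thesis by simp
  qed
  have 1: "a1 = b1"
  proof -
    have "b1 \<le> a1" using A(2) assms 0 by auto
    moreover have "a1 \<le> b1" using B(2) assms 0 by auto
    ultimately show ?thesis by simp
  qed
  have 2: "a2 = b2"
  proof -
    have "b2 \<le> a2" using A(3) assms(1-6) 0 1 by auto
    moreover have "a2 \<le> b2" using B(3) assms(1-6) 0 1 by auto
    ultimately show ?thesis by simp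
  qed
  have 3: "a3 = b3"
  proof -
    have "b3 \<le> a3" using A(4) assms(1-6) 0 1 2 by auto
    moreover have "a3 \<le> b3" using B(4) assms(1-6) 0 1 2 by auto
    ultimately show ?thesis by simp
  qed
  show ?thesis using 0 1 2 3 by simp
qed

lemma iso_init:
  fixes g :: "nat \<Rightarrow> nat"
  assumes "bij_betw g D C" "strict_mono_on D g" "{..<m} \<subseteq> D" "{..<m} \<subseteq> C"
  shows "\<forall>v<m. g v = v"
proof -
  have "g v = v" if "v < m" for v
    using that
  proof (induction v rule: less_induct)
    case (less v)
    have vD: "v \<in> D" using less.prems assms(3) by auto
    have ge: "g v \<ge> v"
    proof (cases v)
      case 0 then show ?thesis by simp
    next
      case (Suc u)
      have "g u = u" using less Suc by auto
      moreover have "g u < g v" using assms(2) Suc vD assms(3) less.prems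
        by (metis lessI lessThan_iff order.strict_trans strict_mono_onD subsetD)
      ultimately show ?thesis using Suc by simp
    qed
    show ?case
    proof (rule ccontr)
      assume ne: "g v \<noteq> v"
      have "v \<in> C" using less.prems assms(4) by auto
      then obtain u where u: "u \<in> D" "g u = v" using assms(1) by (metis bij_betw_def imageE)
      consider "u < v" | "u = v" | "u > v" by linarith
      then show False
      proof cases
        case 1 then show ?thesis using less u ne by (metis less.IH order.strict_trans)
      next
        case 2 then show ?thesis using u ne by simp
      next
        case 3
        have "g v < g u" using strict_mono_onD[OF assms(2) vD u(1) 3] by simp
        then show ?thesis using u ge by simp
      qed
    qed
  qed
  then show ?thesis by blast
qed

lemma mono_bij_chain4:
  fixes g :: "nat \<Rightarrow> nat"
  assumes "bij_betw g {a0,a1,a2,a3} {b0,b1,b2,b3}" "strict_mono_on {a0,a1,a2,a3} g"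
    "a0<a1" "a1<a2" "a2<a3" "b0<b1" "b1<b2" "b2<b3"
  shows "g a0 = b0 \<and> g a1 = b1 \<and> g a2 = b2 \<and> g a3 = b3"
proof -
  have "g a0 < g a1" "g a1 < g a2" "g a2 < g a3"
    using strict_mono_onD[OF assms(2), of a0 a1] strict_mono_onD[OF assms(2), of a1 a2]
      strict_mono_onD[OF assms(2), of a2 a3] assms(3-5) by simp_all
  moreover have "{g a0, g a1, g a2, g a3} = {b0,b1,b2,b3}"
    using assms(1) unfolding bij_betw_def by simp
  ultimately show ?thesis using chain4[of "g a0" "g a1" "g a2" "g a3" b0 b1 b2 b3] assms(6-8) by argo
qed

theorem corollary6p3:
  fixes ar :: "'r \<Rightarrow> nat" and I :: "'r \<Rightarrow> nat list \<Rightarrow> bool"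
  assumes "infinite {R. ar R = 2}"
    and "hypergraph ar (UNIV, I)"
    and "universal ar (UNIV, I)"
  shows "\<exists>IA (c :: (nat \<Rightarrow> nat) \<Rightarrow> nat). hypergraph ar ({..<3}, IA) \<and>
    (\<forall>f. tree_like I f \<longrightarrow>
       (\<forall>k::nat. \<exists>e. is_emb ({..<3}, IA) (UNIV, I) e \<and> e ` {..<3} \<subseteq> range f \<and> c e = k))"
proof -
  have "\<exists>gg::nat \<Rightarrow> 'r. inj gg \<and> range gg \<subseteq> {R. ar R = 2}"
    using assms(1) by (simp only: infinite_iff_countable_subset)
  then obtain gg :: "nat \<Rightarrow> 'r" where gg: "inj gg" "range gg \<subseteq> {R. ar R = 2}"
    by blast
  have Hwf: "\<And>R t. I R t \<Longrightarrow> length t = ar R"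
    using assms(2) unfolding hypergraph_def wf_struc_def by auto
  have Huniq: "\<And>R R' t. I R t \<Longrightarrow> I R' t \<Longrightarrow> R = R'"
    using assms(2) unfolding hypergraph_def snd_conv by blast
  define D :: "nat \<Rightarrow> nat \<Rightarrow> nat" where "D a b = (LEAST v. \<exists>R. I R [v,a] \<noteq> I R [v,b])" for a b
  define c :: "(nat \<Rightarrow> nat) \<Rightarrow> nat" where "c e = (SOME n. I (gg n) [D (e 1) (e 2), e 2])" for e
  define IA :: "'r \<Rightarrow> nat list \<Rightarrow> bool" where "IA R t = (t = [] \<and> I R [])" for R t
  have A1: "length t = ar R \<and> set t \<subseteq> {..<3}" if "IA R t" for R t
    using that Hwf unfolding IA_def by fastforce
  have A2: "distinct t" if "IA R t" for R t using that unfolding IA_def by simp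
  have A3: "IA R t'" if "IA R t" "mset t' = mset t" for R t t' using that unfolding IA_def by simp
  have A4: "R = R'" if "IA R t" "IA R' t" for R R' t using that Huniq unfolding IA_def by blast
  have hA: "hypergraph ar ({..<3}, IA)"
    unfolding hypergraph_def wf_struc_def fst_conv snd_conv
    using A1 A2 A3 A4 by blast
  have main: "\<exists>e. is_emb ({..<3}, IA) (UNIV, I) e \<and> e ` {..<3} \<subseteq> range f \<and> c e = k"
    if tl: "tree_like I f" for f k
  proof -
    have fe: "is_emb (UNIV, I) (UNIV, I) f" using tl unfolding tree_like_def by (rule conjunct1)
    have femb: "strict_mono_on UNIV f" "\<And>R t. I R t = I R (map f t)"
      using fe unfolding is_emb_def by simp_all
    define IG :: "'r \<Rightarrow> nat list \<Rightarrow> bool" where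
      "IG R t = ((R = gg k \<and> mset t = mset [0::nat,3]) \<or> (t = [] \<and> I R []))" for R t
    have ark: "ar (gg k) = 2" using gg by auto
    have G1: "length t = ar R \<and> set t \<subseteq> {..<4}" if h: "IG R t" for R t
    proof -
      from h have "(R = gg k \<and> mset t = mset [0::nat,3]) \<or> (t = [] \<and> I R [])" by (simp add: IG_def)
      then show ?thesis
      proof
        assume a: "R = gg k \<and> mset t = mset [0::nat,3]"
        then have "length t = 2"
          by (metis length_Cons list.size(3) numeral_2_eq_2 size_mset)
        moreover have "set t = {0,3}"
          by (metis a insert_commute list.set(1) list.set(2) set_mset_mset)
        ultimately show ?thesis using a ark by auto
      next
        assume "t = [] \<and> I R []" then show ?thesis using Hwf[of R "[]"] by auto
      qed
    qed
    have G2: "distinct t" if h: "IG R t" for R t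
    proof -
      from h have "(R = gg k \<and> mset t = mset [0::nat,3]) \<or> (t = [] \<and> I R [])" by (simp add: IG_def)
      then show ?thesis
      proof
        assume a: "R = gg k \<and> mset t = mset [0::nat,3]"
        have "distinct [0::nat,3]" by simp
        then show ?thesis using a mset_eq_imp_distinct_iff by metis
      qed simp
    qed
    have G3: "IG R t'" if "IG R t" "mset t' = mset t" for R t t'
      using that by (auto simp: IG_def)
    have G4: "R = R'" if "IG R t" "IG R' t" for R R' t
      using that Huniq by (auto simp: IG_def)
    have hG: "hypergraph ar ({..<4}, IG)"
      unfolding hypergraph_def wf_struc_def fst_conv snd_conv
      using G1 G2 G3 G4 by blast
    obtain E where E: "is_emb ({..<4}, IG) (UNIV, I) E"
      using assms(3) hG unfolding universal_def by blast
    have Esm: "strict_mono_on {..<4} E" and Erel: "\<And>R t. set t \<subseteq> {..<4} \<Longrightarrow> IG R t = I R (map E t)"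
      using E unfolding is_emb_def by auto
    define w where "w = E 0"
    define p where "p = E 1"
    define q where "q = E 2"
    define x where "x = E 3"
    have wp: "w < p" "p < q" "q < x"
      unfolding w_def p_def q_def x_def using Esm by (auto intro: strict_mono_onD)
    define X where "X = {w,p,q}"
    have Xf: "finite X" "X \<noteq> {}" and MaxX: "Max X = q" and MinX: "Min X = w" and qX: "q \<in> X"
      unfolding X_def using wp by auto
    have "\<forall>xi\<in>X. \<forall>x>Max X. \<exists>y>Max X.
          same_tp I (f ` X \<union> {f y}) (X \<union> {x}) \<and>
          same_tp I ({..<f (Min X)} \<union> {f y}) ({..<f (Min X)} \<union> {f xi})"
      using conjunct2[OF tl[unfolded tree_like_def]]
      apply (erule_tac allE[where x = X])
      apply (erule mp)
      using Xf by simp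
    then obtain y where y: "y > q" and st1: "same_tp I (f ` X \<union> {f y}) (X \<union> {x})"
      and st2: "same_tp I ({..<f w} \<union> {f y}) ({..<f w} \<union> {f q})"
      using qX wp MaxX MinX by metis
    have fm: "f w < f p" "f p < f q" "f q < f y"
      using wp y femb(1) by (auto intro: strict_mono_onD)
    obtain g1 where g1: "bij_betw g1 {f w, f p, f q, f y} {w,p,q,x}"
      "strict_mono_on {f w, f p, f q, f y} g1"
      "\<And>R t. set t \<subseteq> {f w, f p, f q, f y} \<Longrightarrow> I R t = I R (map g1 t)"
    proof -
      have "f ` X \<union> {f y} = {f w, f p, f q, f y}" "X \<union> {x} = {w,p,q,x}" unfolding X_def by auto
      then show ?thesis using st1 that unfolding same_tp_def by metis
    qed
    have g1v: "g1 (f w) = w" "g1 (f p) = p" "g1 (f q) = q" "g1 (f y) = x"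
      using mono_bij_chain4[OF g1(1,2) fm wp] by auto
    obtain g2 where g2: "bij_betw g2 ({..<f w} \<union> {f y}) ({..<f w} \<union> {f q})"
      "strict_mono_on ({..<f w} \<union> {f y}) g2"
      "\<And>R t. set t \<subseteq> {..<f w} \<union> {f y} \<Longrightarrow> I R t = I R (map g2 t)"
      using st2 unfolding same_tp_def by auto
    have g2id: "\<forall>v<f w. g2 v = v" using iso_init[OF g2(1,2)] by auto
    have g2y: "g2 (f y) = f q"
    proof -
      have "g2 (f y) \<in> {..<f w} \<union> {f q}" using g2(1) unfolding bij_betw_def by auto
      moreover have "g2 (f y) \<notin> {..<f w}"
      proof
        assume a: "g2 (f y) \<in> {..<f w}"
        then have "g2 (g2 (f y)) = g2 (f y)" using g2id by auto
        moreover have "inj_on g2 ({..<f w} \<union> {f y})" using g2(1) bij_betw_def by auto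
        ultimately have "g2 (f y) = f y" using a inj_onD[of g2 "{..<f w} \<union> {f y}" "g2 (f y)" "f y"] by simp
        then show False using a fm by auto
      qed
      ultimately show ?thesis by auto
    qed
    have below: "I R [v, f q] = I R [v, f y]" if "v < f w" for v R
      using g2(3)[of "[v, f y]" R] that g2id g2y by auto
    have rel1: "I (gg k) [f w, f y]"
    proof -
      have "I (gg k) [f w, f y] = I (gg k) [w, x]" using g1(3)[of "[f w, f y]"] g1v by auto
      also have "\<dots> = IG (gg k) [0,3]" using Erel[of "[0,3]"] by (simp add: w_def x_def)
      finally show ?thesis by (simp add: IG_def)
    qed
    have rel2: "\<not> I (gg k) [f w, f q]"
    proof -
      have "I (gg k) [f w, f q] = I (gg k) [w, q]" using femb(2)[of "gg k" "[w,q]"] by simp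
      also have "\<dots> = IG (gg k) [0,2]" using Erel[of "[0,2]"] by (simp add: w_def q_def)
      finally show ?thesis by (simp add: IG_def)
    qed
    have Dv: "D (f q) (f y) = f w"
      unfolding D_def
    proof (rule Least_equality)
      show "\<exists>R. I R [f w, f q] \<noteq> I R [f w, f y]" using rel1 rel2 by auto
    next
      fix v assume "\<exists>R. I R [v, f q] \<noteq> I R [v, f y]"
      then show "f w \<le> v" using below by (meson not_le)
    qed
    define e :: "nat \<Rightarrow> nat" where
      "e = restrict (\<lambda>i. if i = 0 then f p else if i = 1 then f q else f y) {..<3}"
    have e0: "e 0 = f p" "e 1 = f q" "e 2 = f y" by (auto simp: e_def)
    have ce: "c e = k"
    proof -
      have "c e = (SOME n. I (gg n) [f w, f y])" using c_def e0 Dv by simp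
      also have "\<dots> = k"
      proof (rule some_equality)
        show "I (gg k) [f w, f y]" by (rule rel1)
      next
        fix n assume "I (gg n) [f w, f y]"
        then have "gg n = gg k" using Huniq rel1 by blast
        then show "n = k" using gg(1) by (auto dest: injD)
      qed
      finally show ?thesis .
    qed
    have erange: "e ` {..<3} \<subseteq> range f" by (auto simp: e_def)
    have emb: "is_emb ({..<3}, IA) (UNIV, I) e"
      unfolding is_emb_def fst_conv snd_conv
    proof (intro conjI allI impI)
      show "e \<in> extensional {..<3}" by (simp add: e_def)
      show "e ` {..<3} \<subseteq> UNIV" by simp
      show "strict_mono_on {..<3} e"
      proof (rule strict_mono_onI)
        fix r s :: nat assume "r \<in> {..<3}" "s \<in> {..<3}" "r < s"
        then show "e r < e s" using fm by (auto simp: e_def less_Suc_eq numeral_3_eq_3)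
      qed
    next
      fix R t assume ts: "set t \<subseteq> {..<3::nat}"
      define h :: "nat \<Rightarrow> nat" where "h i = Suc i" for i
      have "I R (map e t) = I R (map g1 (map e t))"
        using g1(3)[of "map e t"] ts by (auto simp: e_def)
      also have "map g1 (map e t) = map E (map h t)"
        using ts g1v by (auto simp: e_def h_def p_def q_def x_def numeral_3_eq_3 numeral_2_eq_2 less_Suc_eq)
      also have "I R (map E (map h t)) = IG R (map h t)"
      proof -
        have "set (map h t) \<subseteq> {..<4}" using ts by (auto simp: h_def)
        then show ?thesis using Erel[of "map h t" R] by simp
      qed
      also have "\<dots> = IA R t"
      proof -
        have "0 \<notin> set (map h t)" by (auto simp: h_def)
        then have "\<not> mset (map h t) = mset [0::nat,3]"
          by (metis list.set_intros(1) set_mset_mset)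
        then show ?thesis by (simp add: IG_def IA_def)
      qed
      finally show "IA R t = I R (map e t)" by simp
    qed
    show ?thesis using emb erange ce by blast
  qed
  show ?thesis using hA main by blast
qed

end
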